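(* Let $q\ge2$, $m\ge1$, $a$ a nonnegative integer and $R\in[m]$. Then $$\max_{{\boldsymbol y}\in\Sigma_{q,R}^m}\sum_{i=1}^{R}(r_i+a)\log_2(r_i+a)=(m-R+1+a)\log_2(m-R+1+a)+(R-1)(a+1)\log_2(a+1),$$ where $(r_1,\dots,r_R)$ denotes the run length profile of ${\boldsymbol y}$.
   Context: $\Sigma_q=\{0,\dots,q-1\}$. A run is a maximal block of identical consecutive symbols; the run length profile of ${\boldsymbol y}$ is the vector of its run lengths from left to right. $\Sigma_{q,R}^m$ is the set of sequences in $\Sigma_q^m$ with exactly $R$ runs. *)

theory Defs
  imports "HOL-Analysis.Analysis"
begin

fun run_profile :: "'a list \<Rightarrow> nat list" where
  "run_profile [] = []"
| "run_profile (x # xs) =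
     (let k = length (takeWhile (\<lambda>z. z = x) xs)
      in Suc k # run_profile (drop k xs))"

definition seqs_with_runs :: "nat \<Rightarrow> nat \<Rightarrow> nat \<Rightarrow> nat list set" where
  "seqs_with_runs q m R =
     {y. length y = m \<and> set y \<subseteq> {..<q} \<and> length (run_profile y) = R}"

end

theory Submission imports Defs begin

definition hh :: "real \<Rightarrow> real" where "hh t = t * log 2 t"

lemma hh_convex: "convex_on {0<..} hh"
  unfolding hh_def
proof (rule f''_ge0_imp_convex[where f' = "\<lambda>x. log 2 x + 1 / ln 2" and f'' = "\<lambda>x. 1 / (x * ln 2)"])
  fix x :: real assume x: "x \<in> {0<..}"
  show "((\<lambda>t. t * log 2 t) has_real_derivative log 2 x + 1 / ln 2) (at x)"
    using x by (auto intro!: derivative_eq_intros simp: log_def field_simps)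
  show "((\<lambda>x. log 2 x + 1 / ln 2) has_real_derivative 1 / (x * ln 2)) (at x)"
    using x by (auto intro!: derivative_eq_intros simp: log_def field_simps)
  show "0 \<le> 1 / (x * ln 2)" using x by simp
qed auto

lemma two_point:
  assumes c: "0 < c" "c \<le> A" "c \<le> B"
  shows "hh A + hh B \<le> hh (A + B - c) + hh c"
proof (cases "A + B - c = c")
  case True
  have "A = c" "B = c" using True c by linarith+
  then show ?thesis by simp
next
  case False
  define D where "D = A + B - c"
  have Dc: "D > c" using False c unfolding D_def by auto
  define t where "t = (A - c) / (D - c)"
  have t01: "0 \<le> t" "t \<le> 1" using c Dc unfolding t_def D_def by auto
  have tD: "t * (D - c) = A - c" using Dc unfolding t_def by simp
  have A: "A = (1 - t) *\<^sub>R c + t *\<^sub>R D" using tD by (simp add: algebra_simps)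
  have B: "B = (1 - (1 - t)) *\<^sub>R c + (1 - t) *\<^sub>R D" using tD unfolding D_def by (simp add: algebra_simps)
  have "hh A \<le> (1 - t) * hh c + t * hh D"
    unfolding A by (rule convex_onD[OF hh_convex]) (use t01 c Dc in auto)
  moreover have "hh B \<le> (1 - (1 - t)) * hh c + (1 - t) * hh D"
    unfolding B by (rule convex_onD[OF hh_convex]) (use t01 c Dc in auto)
  ultimately show ?thesis unfolding D_def by (simp add: algebra_simps)
qed

lemma list_bound:
  fixes a :: nat
  assumes "xs \<noteq> []" "\<forall>x\<in>set xs. x \<ge> 1"
  shows "(\<Sum>x\<leftarrow>xs. hh (real x + a)) \<le> hh (real (sum_list xs) - real (length xs) + 1 + a)
           + (real (length xs) - 1) * hh (a + 1)"
  using assms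
proof (induction xs)
  case Nil then show ?case by simp
next
  case (Cons x xs)
  show ?case
  proof (cases "xs = []")
    case True then show ?thesis by simp
  next
    case False
    have sl: "sum_list xs \<ge> length xs" using Cons.prems
      by (induction xs) auto
    have IH: "(\<Sum>x\<leftarrow>xs. hh (real x + a)) \<le> hh (real (sum_list xs) - real (length xs) + 1 + a)
           + (real (length xs) - 1) * hh (a + 1)" using Cons False by auto
    have tp: "hh (real x + a) + hh (real (sum_list xs) - real (length xs) + 1 + a)
         \<le> hh ((real x + a) + (real (sum_list xs) - real (length xs) + 1 + a) - (a+1)) + hh (a+1)"
      by (rule two_point) (use Cons.prems sl in auto)
    have "(\<Sum>x\<leftarrow>x#xs. hh (real x + a)) = hh (real x + a) + (\<Sum>x\<leftarrow>xs. hh (real x + a))" by simp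
    also have "\<dots> \<le> hh ((real x + a) + (real (sum_list xs) - real (length xs) + 1 + a) - (a+1)) + hh (a+1)
           + (real (length xs) - 1) * hh (a + 1)" using IH tp by linarith
    also have "\<dots> = hh (real (sum_list (x#xs)) - real (length (x#xs)) + 1 + a)
           + (real (length (x#xs)) - 1) * hh (a + 1)"
      by (simp add: algebra_simps)
    finally show ?thesis .
  qed
qed

lemma rp_props: "sum_list (run_profile y) = length y \<and> (\<forall>r\<in>set (run_profile y). r \<ge> 1)"
proof (induction y rule: run_profile.induct)
  case 1 then show ?case by simp
next
  case (2 x xs)
  have "length (takeWhile (\<lambda>z. z = x) xs) \<le> length xs" by (rule length_takeWhile_le)
  then show ?case using 2 by (auto simp: Let_def)
qed

lemma rp_rep: "ys = [] \<or> hd ys \<noteq> x \<Longrightarrow> run_profile (replicate (Suc k) x @ ys) = Suc k # run_profile ys"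
proof -
  assume h: "ys = [] \<or> hd ys \<noteq> x"
  have "takeWhile (\<lambda>z. z = x) (replicate k x @ ys) = replicate k x"
  proof (cases ys)
    case Nil then show ?thesis by (induction k) auto
  next
    case (Cons u us) then show ?thesis using h by (induction k) auto
  qed
  then show ?thesis by (simp add: Let_def)
qed

fun alt :: "nat \<Rightarrow> nat \<Rightarrow> nat list" where
  "alt 0 b = []"
| "alt (Suc n) b = b # alt n (1 - b)"

lemma alt_props: "b \<le> 1 \<Longrightarrow> run_profile (alt n b) = replicate n 1 \<and> length (alt n b) = n
   \<and> set (alt n b) \<subseteq> {0,1} \<and> (n > 0 \<longrightarrow> hd (alt n b) = b)"
proof (induction n arbitrary: b)
  case 0 then show ?case by simp
next
  case (Suc n)
  have IH: "run_profile (alt n (1-b)) = replicate n 1 \<and> length (alt n (1-b)) = n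
   \<and> set (alt n (1-b)) \<subseteq> {0,1} \<and> (n > 0 \<longrightarrow> hd (alt n (1-b)) = 1-b)" using Suc by auto
  have "run_profile (replicate (Suc 0) b @ alt n (1-b)) = Suc 0 # run_profile (alt n (1-b))"
  proof (rule rp_rep)
    have "b = 0 \<or> b = 1" using Suc.prems by auto
    then show "alt n (1 - b) = [] \<or> hd (alt n (1 - b)) \<noteq> b" using IH by (cases n) auto
  qed
  moreover have "b = 0 \<or> b = 1" using Suc.prems by auto
  ultimately show ?case using IH by auto
qed

lemma sum_nth_list: "(\<Sum>i<length xs. g (xs!i)) = (\<Sum>x\<leftarrow>xs. g x)"
  by (simp add: sum_list_sum_nth atLeast0LessThan)

theorem lemma6:
  fixes q m a R :: nat
  assumes "q \<ge> 2" and "m \<ge> 1" and "1 \<le> R" and "R \<le> m"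
  shows "Max ((\<lambda>y. \<Sum>i<R. (real (run_profile y ! i) + real a) *
                             log 2 (real (run_profile y ! i) + real a))
              ` seqs_with_runs q m R)
         = (real m - real R + 1 + real a) * log 2 (real m - real R + 1 + real a)
           + (real R - 1) * (real a + 1) * log 2 (real a + 1)"
proof -
  define F where "F = (\<lambda>y::nat list. \<Sum>i<R. (real (run_profile y ! i) + real a) *
                             log 2 (real (run_profile y ! i) + real a))"
  have F: "F y = (\<Sum>x\<leftarrow>run_profile y. hh (real x + a))" if "length (run_profile y) = R" for y
    unfolding F_def hh_def using sum_nth_list[of "\<lambda>x. hh (real x + a)" "run_profile y"] that
    by (simp add: hh_def)
  define V where "V = (real m - real R + 1 + real a) * log 2 (real m - real R + 1 + real a)
           + (real R - 1) * (real a + 1) * log 2 (real a + 1)"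
  have fin: "finite (seqs_with_runs q m R)"
  proof -
    have "seqs_with_runs q m R \<subseteq> {xs. set xs \<subseteq> {..<q} \<and> length xs = m}"
      unfolding seqs_with_runs_def by auto
    then show ?thesis using finite_lists_length_eq[of "{..<q}" m] finite_subset by blast
  qed
  define y0 where "y0 = replicate (Suc (m - R)) (0::nat) @ alt (R - 1) 1"
  have ap: "run_profile (alt (R-1) 1) = replicate (R-1) 1 \<and> length (alt (R-1) 1) = R-1
   \<and> set (alt (R-1) 1) \<subseteq> {0,1} \<and> (R-1 > 0 \<longrightarrow> hd (alt (R-1) 1) = 1)"
    by (rule alt_props) simp
  have rp0: "run_profile y0 = Suc (m - R) # replicate (R-1) 1"
    unfolding y0_def
  proof (subst rp_rep)
    show "alt (R - 1) 1 = [] \<or> hd (alt (R - 1) 1) \<noteq> 0" using ap by (cases "R - 1") auto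
  qed (use ap in simp)
  have y0in: "y0 \<in> seqs_with_runs q m R"
    unfolding seqs_with_runs_def using rp0 ap assms by (auto simp: y0_def)
  have Fy0: "F y0 = V"
  proof -
    have "F y0 = hh (real (Suc (m - R)) + a) + (real R - 1) * hh (1 + a)"
      using F[of y0] rp0 assms by (simp add: sum_list_replicate of_nat_diff)
    also have "\<dots> = V" unfolding V_def hh_def using assms by (simp add: of_nat_diff algebra_simps)
    finally show ?thesis .
  qed
  have ub: "F y \<le> V" if "y \<in> seqs_with_runs q m R" for y
  proof -
    have len: "length (run_profile y) = R" and ly: "length y = m" using that unfolding seqs_with_runs_def by auto
    have p: "sum_list (run_profile y) = m" "\<forall>r\<in>set (run_profile y). r \<ge> 1" using rp_props[of y] ly by auto
    have ne: "run_profile y \<noteq> []" using len assms by auto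
    have "F y \<le> hh (real (sum_list (run_profile y)) - real (length (run_profile y)) + 1 + a)
           + (real (length (run_profile y)) - 1) * hh (a + 1)"
      unfolding F[OF len] by (rule list_bound[OF ne p(2)])
    also have "\<dots> = V" unfolding V_def hh_def p(1) len by (simp add: algebra_simps)
    finally show ?thesis .
  qed
  have "Max (F ` seqs_with_runs q m R) = V"
    by (rule Max_eqI) (use fin ub y0in Fy0 in auto)
  then show ?thesis unfolding F_def V_def .
qed

end
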